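(* Let $n$ be even and $1\le\kappa<n$. Let $\mathcal{C}_1\subseteq\{0,1\}^n$ be the set of all balanced binary sequences of length $n$ (so $|\mathcal{C}_1|=\binom{n}{n/2}$) and let $\mathcal{C}_2\subseteq\{0,1\}^n$ be a $\kappa$-WMU code. Let $\mathcal{C}=\{\Psi(\mathbf{a},\mathbf{b}):\mathbf{a}\in\mathcal{C}_1,\mathbf{b}\in\mathcal{C}_2\}\subseteq\{\mathtt{A},\mathtt{T},\mathtt{C},\mathtt{G}\}^n$. Then $\mathcal{C}$ is a $\kappa$-WMU code and $\mathcal{C}$ is balanced.
   Context: $\Psi(\mathbf{a},\mathbf{b})=(c_1,\dots,c_n)$ with $c_i=\mathtt{A},\mathtt{T},\mathtt{C},\mathtt{G}$ according as $(a_i,b_i)=(0,0),(0,1),(1,0),(1,1)$. A binary sequence of length $n$ is balanced if exactly $n/2$ entries are $1$; a DNA sequence of length $n$ is balanced if exactly $n/2$ entries lie in $\{\mathtt{G},\mathtt{C}\}$; a code is balanced if every codeword is. A code $\mathcal{C}$ of length $n$ over an alphabet is $\kappa$-WMU if for all not necessarily distinct $\mathbf{a},\mathbf{b}\in\mathcal{C}$ and all $\kappa\le l<n$, $(a_1,\dots,a_l)\ne(b_{n-l+1},\dots,b_n)$. *)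

theory Defs
  imports Main
begin

datatype dna = A | T | C | G

definition psi_sym :: "bool \<Rightarrow> bool \<Rightarrow> dna" where
  "psi_sym a b = (if \<not> a \<and> \<not> b then A else if \<not> a \<and> b then T
                  else if a \<and> \<not> b then C else G)"

text \<open>Psi(a,b) for binary sequences of the same length (bits encoded as bool, 1 = True).\<close>
definition Psi :: "bool list \<Rightarrow> bool list \<Rightarrow> dna list" where
  "Psi a b = map2 psi_sym a b"

definition balanced_bin :: "nat \<Rightarrow> bool list \<Rightarrow> bool" where
  "balanced_bin n x \<longleftrightarrow> length x = n \<and> 2 * length (filter id x) = n"

definition balanced_dna :: "nat \<Rightarrow> dna list \<Rightarrow> bool" where
  "balanced_dna n x \<longleftrightarrow> length x = n \<and> 2 * length (filter (\<lambda>c. c \<in> {G, C}) x) = n"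

definition balanced_code :: "nat \<Rightarrow> dna list set \<Rightarrow> bool" where
  "balanced_code n Cd \<longleftrightarrow> (\<forall>x\<in>Cd. balanced_dna n x)"

definition WMU :: "nat \<Rightarrow> nat \<Rightarrow> 'a list set \<Rightarrow> bool" where
  "WMU \<kappa> n Cd \<longleftrightarrow> (\<forall>x\<in>Cd. length x = n) \<and>
     (\<forall>a\<in>Cd. \<forall>b\<in>Cd. \<forall>l. \<kappa> \<le> l \<and> l < n \<longrightarrow> take l a \<noteq> drop (n - l) b)"

end

theory Submission
  imports Defs
begin

definition sbit :: "dna \<Rightarrow> bool" where
  "sbit c = (c = T \<or> c = G)"

lemma sbit_psi: "sbit (psi_sym a b) = b"
  by (auto simp: sbit_def psi_sym_def)

lemma map_sbit_Psi: "length a = length b \<Longrightarrow> map sbit (Psi a b) = b"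
proof (induction a arbitrary: b)
  case Nil thus ?case by (simp add: Psi_def)
next
  case (Cons x xs) thus ?case by (cases b) (auto simp: Psi_def sbit_psi)
qed

lemma count_Psi: "length a = length b \<Longrightarrow>
  length (filter (\<lambda>c. c \<in> {G, C}) (Psi a b)) = length (filter id a)"
proof (induction a arbitrary: b)
  case Nil thus ?case by (simp add: Psi_def)
next
  case (Cons x xs) thus ?case by (cases b) (auto simp: Psi_def psi_sym_def)
qed

lemma len_Psi: "length (Psi a b) = min (length a) (length b)"
  by (simp add: Psi_def)

theorem lemma4:
  fixes n \<kappa> :: nat and C2 :: "bool list set"
  assumes "even n" and "1 \<le> \<kappa>" and "\<kappa> < n"
    and "WMU \<kappa> n C2"
  defines "C1 \<equiv> {x. balanced_bin n x}"
  defines "Cd \<equiv> {Psi a b | a b. a \<in> C1 \<and> b \<in> C2}"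
  shows "WMU \<kappa> n Cd \<and> balanced_code n Cd"
proof -
  have L2: "\<And>b. b \<in> C2 \<Longrightarrow> length b = n" using assms(4) by (simp add: WMU_def)
  have L1: "\<And>a. a \<in> C1 \<Longrightarrow> length a = n \<and> 2 * length (filter id a) = n"
    by (simp add: C1_def balanced_bin_def)
  have W: "\<And>b b' l. b \<in> C2 \<Longrightarrow> b' \<in> C2 \<Longrightarrow> \<kappa> \<le> l \<Longrightarrow> l < n \<Longrightarrow> take l b \<noteq> drop (n - l) b'"
    using assms(4) by (simp add: WMU_def)
  have len: "\<forall>x\<in>Cd. length x = n"
    using L1 L2 by (auto simp: Cd_def len_Psi)
  have wm: "\<forall>x\<in>Cd. \<forall>y\<in>Cd. \<forall>l. \<kappa> \<le> l \<and> l < n \<longrightarrow> take l x \<noteq> drop (n - l) y"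
  proof (intro ballI allI impI notI)
    fix x y l
    assume x: "x \<in> Cd" and y: "y \<in> Cd" and l: "\<kappa> \<le> l \<and> l < n" and eq: "take l x = drop (n - l) y"
    obtain a b where ab: "x = Psi a b" "a \<in> C1" "b \<in> C2" using x by (auto simp: Cd_def)
    obtain a' b' where ab': "y = Psi a' b'" "a' \<in> C1" "b' \<in> C2" using y by (auto simp: Cd_def)
    have "map sbit (take l x) = map sbit (drop (n - l) y)" using eq by simp
    hence "take l (map sbit x) = drop (n - l) (map sbit y)" by (simp add: take_map drop_map)
    moreover have "map sbit x = b" using ab L1 L2 by (simp add: map_sbit_Psi)
    moreover have "map sbit y = b'" using ab' L1 L2 by (simp add: map_sbit_Psi)
    ultimately show False using W[OF ab(3) ab'(3)] l by simp
  qed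
  have bal: "balanced_code n Cd"
    unfolding balanced_code_def balanced_dna_def
  proof
    fix x assume x: "x \<in> Cd"
    then obtain a b where ab: "x = Psi a b" "a \<in> C1" "b \<in> C2" by (auto simp: Cd_def)
    show "length x = n \<and> 2 * length (filter (\<lambda>c. c \<in> {G, C}) x) = n"
      using ab L1 L2 count_Psi len x by auto
  qed
  show ?thesis using len wm bal by (simp add: WMU_def)
qed

end
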